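(* Let $T:V\to\mathfrak g$ be an $\mathcal O$-operator on a Lie algebra $\mathfrak g$ with respect to a representation $(V;\rho)$. Then for every $k\ge0$ and every $f\in\mathrm{Hom}(\wedge^kV,\mathfrak g)$, $d_{\bar\rho}f=(-1)^k[\![T,f]\!]$.
   Context: An $\mathcal O$-operator: linear $T:V\to\mathfrak g$ with $[Tu,Tv]=T(\rho(Tu)(v)-\rho(Tv)(u))$. Set $[u,v]_T=\rho(Tu)(v)-\rho(Tv)(u)$ (a Lie bracket on $V$) and $\bar\rho(u)(x)=[Tu,x]+T\rho(x)(u)$, a representation of $(V,[\cdot,\cdot]_T)$ on $\mathfrak g$. $d_{\bar\rho}:\mathrm{Hom}(\wedge^kV,\mathfrak g)\to\mathrm{Hom}(\wedge^{k+1}V,\mathfrak g)$ is the Chevalley–Eilenberg coboundary: $d_{\bar\rho}f(u_1,\dots,u_{k+1})=\sum_{i}(-1)^{i+1}[Tu_i,f(u_1,\dots,\hat u_i,\dots,u_{k+1})]+\sum_i(-1)^{i+1}T\rho(f(u_1,\dots,\hat u_i,\dots,u_{k+1}))(u_i)+\sum_{i<j}(-1)^{i+j}f([u_i,u_j]_T,u_1,\dots,\hat u_i,\dots,\hat u_j,\dots,u_{k+1})$. The bracket $[\![\cdot,\cdot]\!]$ on $\bigoplus_k\mathrm{Hom}(\wedge^kV,\mathfrak g)$ is $[\![P,Q]\!](u_1,\dots,u_{m+n})=\sum_{\sigma\in\mathbb S_{(m,1,n-1)}}(-1)^{\sigma}P(\rho(Q(u_{\sigma(1)},\dots,u_{\sigma(m)}))u_{\sigma(m+1)},u_{\sigma(m+2)},\dots,u_{\sigma(m+n)})-(-1)^{mn}\sum_{\sigma\in\mathbb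 S_{(n,1,m-1)}}(-1)^{\sigma}Q(\rho(P(u_{\sigma(1)},\dots,u_{\sigma(n)}))u_{\sigma(n+1)},u_{\sigma(n+2)},\dots,u_{\sigma(m+n)})+(-1)^{mn}\sum_{\sigma\in\mathbb S_{(n,m)}}(-1)^{\sigma}[P(u_{\sigma(1)},\dots,u_{\sigma(n)}),Q(u_{\sigma(n+1)},\dots,u_{\sigma(m+n)})]$ for $P\in\mathrm{Hom}(\wedge^nV,\mathfrak g)$, $Q\in\mathrm{Hom}(\wedge^mV,\mathfrak g)$, where $\mathbb S_{(i_1,\dots,i_k)}$ denotes unshuffles (permutations increasing on consecutive blocks of the given sizes). *)

theory Defs
  imports Main "HOL.Vector_Spaces" "HOL-Combinatorics.Permutations"
begin

definition lie_algebra :: "('k::field \<Rightarrow> 'g::ab_group_add \<Rightarrow> 'g) \<Rightarrow> ('g \<Rightarrow> 'g \<Rightarrow> 'g) \<Rightarrow> bool" where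
  "lie_algebra sc br \<longleftrightarrow> vector_space sc
     \<and> (\<forall>x. Vector_Spaces.linear sc sc (br x))
     \<and> (\<forall>y. Vector_Spaces.linear sc sc (\<lambda>x. br x y))
     \<and> (\<forall>x. br x x = 0)
     \<and> (\<forall>x y z. br x (br y z) + br y (br z x) + br z (br x y) = 0)"

definition lie_representation ::
  "('k::field \<Rightarrow> 'g::ab_group_add \<Rightarrow> 'g) \<Rightarrow> ('g \<Rightarrow> 'g \<Rightarrow> 'g) \<Rightarrow>
   ('k \<Rightarrow> 'v::ab_group_add \<Rightarrow> 'v) \<Rightarrow> ('g \<Rightarrow> 'v \<Rightarrow> 'v) \<Rightarrow> bool" where
  "lie_representation scg br scv rho \<longleftrightarrow> vector_space scv
     \<and> (\<forall>x. Vector_Spaces.linear scv scv (rho x))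
     \<and> (\<forall>v. Vector_Spaces.linear scg scv (\<lambda>x. rho x v))
     \<and> (\<forall>x y v. rho (br x y) v = rho x (rho y v) - rho y (rho x v))"

definition O_operator ::
  "('k::field \<Rightarrow> 'g::ab_group_add \<Rightarrow> 'g) \<Rightarrow> ('g \<Rightarrow> 'g \<Rightarrow> 'g) \<Rightarrow>
   ('k \<Rightarrow> 'v::ab_group_add \<Rightarrow> 'v) \<Rightarrow> ('g \<Rightarrow> 'v \<Rightarrow> 'v) \<Rightarrow> ('v \<Rightarrow> 'g) \<Rightarrow> bool" where
  "O_operator scg br scv rho T \<longleftrightarrow> Vector_Spaces.linear scv scg T
     \<and> (\<forall>u v. br (T u) (T v) = T (rho (T u) v - rho (T v) u))"

text \<open>Elements of Hom(wedge^k V, g): maps on lists of length k that are multilinear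
  and alternating (values on lists of other lengths are irrelevant).\<close>

definition alt_cochain ::
  "('k::field \<Rightarrow> 'v::ab_group_add \<Rightarrow> 'v) \<Rightarrow> ('k \<Rightarrow> 'g::ab_group_add \<Rightarrow> 'g) \<Rightarrow> nat \<Rightarrow> ('v list \<Rightarrow> 'g) \<Rightarrow> bool" where
  "alt_cochain scv scg k f \<longleftrightarrow>
     (\<forall>us i. length us = k \<and> i < k \<longrightarrow> Vector_Spaces.linear scv scg (\<lambda>x. f (us[i := x])))
   \<and> (\<forall>us i j. length us = k \<and> i < j \<and> j < k \<and> us ! i = us ! j \<longrightarrow> f us = 0)"

definition T_bracket :: "('g \<Rightarrow> 'v \<Rightarrow> 'v::ab_group_add) \<Rightarrow> ('v \<Rightarrow> 'g) \<Rightarrow> 'v \<Rightarrow> 'v \<Rightarrow> 'v" where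
  "T_bracket rho T u v = rho (T u) v - rho (T v) u"

definition del :: "nat \<Rightarrow> 'a list \<Rightarrow> 'a list" where
  "del i xs = take i xs @ drop (Suc i) xs"

text \<open>Chevalley-Eilenberg coboundary d_{rho-bar} of f (a k-cochain), evaluated on a list of
  k+1 vectors; indices are 0-based, so (-1)^(i+1) becomes (-1)^i and (-1)^(i+j) is unchanged.\<close>
definition d_bar ::
  "('k::field \<Rightarrow> 'g::ab_group_add \<Rightarrow> 'g) \<Rightarrow> ('g \<Rightarrow> 'g \<Rightarrow> 'g) \<Rightarrow> ('g \<Rightarrow> 'v::ab_group_add \<Rightarrow> 'v)
   \<Rightarrow> ('v \<Rightarrow> 'g) \<Rightarrow> nat \<Rightarrow> ('v list \<Rightarrow> 'g) \<Rightarrow> 'v list \<Rightarrow> 'g" where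
  "d_bar scg br rho T k f us =
     (\<Sum>i<Suc k. scg ((-1) ^ i) (br (T (us ! i)) (f (del i us))))
   + (\<Sum>i<Suc k. scg ((-1) ^ i) (T (rho (f (del i us)) (us ! i))))
   + (\<Sum>j<Suc k. \<Sum>i<j. scg ((-1) ^ (i + j))
        (f (T_bracket rho T (us ! i) (us ! j) # del i (del j us))))"

definition unshuffles :: "nat list \<Rightarrow> (nat \<Rightarrow> nat) set" where
  "unshuffles bs = {\<sigma>. \<sigma> permutes {..<sum_list bs} \<and>
     (\<forall>b<length bs. \<forall>i j. sum_list (take b bs) \<le> i \<and> i < j \<and> j < sum_list (take (Suc b) bs)
        \<longrightarrow> \<sigma> i < \<sigma> j)}"

definition seg :: "'a list \<Rightarrow> (nat \<Rightarrow> nat) \<Rightarrow> nat \<Rightarrow> nat \<Rightarrow> 'a list" where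
  "seg us \<sigma> a b = map (\<lambda>i. us ! \<sigma> i) [a..<b]"

text \<open>A sum over unshuffles with a block of size -1 (i.e. the first sum when n=0,
  the second when m=0) is empty and taken to be 0.\<close>
definition bbracket ::
  "('k::field \<Rightarrow> 'g::ab_group_add \<Rightarrow> 'g) \<Rightarrow> ('g \<Rightarrow> 'g \<Rightarrow> 'g) \<Rightarrow> ('g \<Rightarrow> 'v \<Rightarrow> 'v)
   \<Rightarrow> nat \<Rightarrow> ('v list \<Rightarrow> 'g) \<Rightarrow> nat \<Rightarrow> ('v list \<Rightarrow> 'g) \<Rightarrow> 'v list \<Rightarrow> 'g" where
  "bbracket scg br rho n P m Q us =
     (if n = 0 then 0 else
       (\<Sum>\<sigma>\<in>unshuffles [m, 1, n - 1]. scg (of_int (sign \<sigma>))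
          (P (rho (Q (seg us \<sigma> 0 m)) (us ! \<sigma> m) # seg us \<sigma> (m + 1) (m + n)))))
   - scg ((-1) ^ (m * n))
     (if m = 0 then 0 else
       (\<Sum>\<sigma>\<in>unshuffles [n, 1, m - 1]. scg (of_int (sign \<sigma>))
          (Q (rho (P (seg us \<sigma> 0 n)) (us ! \<sigma> n) # seg us \<sigma> (n + 1) (m + n)))))
   + scg ((-1) ^ (m * n))
       (\<Sum>\<sigma>\<in>unshuffles [n, m]. scg (of_int (sign \<sigma>))
          (br (P (seg us \<sigma> 0 n)) (Q (seg us \<sigma> n (m + n)))))"

end

theory Submission
  imports Defs
begin

definition Dp :: "nat \<Rightarrow> nat \<Rightarrow> nat \<Rightarrow> nat" where
  "Dp a i p = (if p = a then a+i else if a < p \<and> p \<le> a+i then p-1 else p)"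
definition Cp :: "nat \<Rightarrow> nat \<Rightarrow> nat \<Rightarrow> nat" where
  "Cp a m p = (if a \<le> p \<and> p < a+m then p+1 else if p = a+m then a else p)"

lemma Dp0: "Dp a 0 = id" by (rule ext) (simp add: Dp_def)
lemma Cp0: "Cp a 0 = id" by (rule ext) (simp add: Cp_def)
lemma DpSuc: "Dp a (Suc i) = transpose (a+i) (a+i+1) \<circ> Dp a i"
  by (rule ext) (auto simp: Dp_def transpose_def)
lemma CpSuc: "Cp a (Suc m) = transpose a (a+1) \<circ> Cp (a+1) m"
  by (rule ext) (auto simp: Cp_def transpose_def)

lemma Dp_perm: "Dp a i permutes {a..a+i} \<and> sign (Dp a i) = (-1)^i"
proof (induction i)
  case 0 then show ?case by (simp add: Dp0 id_def)
next
  case (Suc i)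
  have p1: "Dp a i permutes {a..a+Suc i}" using Suc permutes_subset by fastforce
  have p2: "transpose (a+i) (a+i+1) permutes {a..a+Suc i}" by (rule permutes_swap_id) auto
  have "permutation (Dp a i)" using p1 permutes_imp_permutation by blast
  note pp = this
  have e1: "sign (transpose (a+i) (a+i+1) \<circ> Dp a i) = sign (transpose (a+i) (a+i+1)) * sign (Dp a i)"
    by (rule sign_compose[OF permutation_swap_id pp])
  have e2: "sign (transpose (a+i) (a+i+1)) = (-1::int)" by (simp add: sign_swap_id)
  show ?case unfolding DpSuc e1 e2
    apply (rule conjI) apply (rule permutes_compose[OF p1 p2]) using Suc.IH by simp
qed

lemma Cp_perm: "Cp a m permutes {a..a+m} \<and> sign (Cp a m) = (-1)^m"
proof (induction m arbitrary: a)
  case 0 then show ?case by (simp add: Cp0 id_def)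
next
  case (Suc m)
  have p1: "Cp (a+1) m permutes {a..a+Suc m}" using Suc[of "a+1"] permutes_subset by fastforce
  have p2: "transpose a (a+1) permutes {a..a+Suc m}" by (rule permutes_swap_id) auto
  have "permutation (Cp (a+1) m)" using p1 permutes_imp_permutation by blast
  note pp = this
  have e1: "sign (transpose a (a+1) \<circ> Cp (a+1) m) = sign (transpose a (a+1)) * sign (Cp (a+1) m)"
    by (rule sign_compose[OF permutation_swap_id pp])
  have e2: "sign (transpose a (a+1)) = (-1::int)" by (simp add: sign_swap_id)
  show ?case unfolding CpSuc e1 e2
    apply (rule conjI) apply (rule permutes_compose[OF p1 p2]) using Suc.IH[of "a+1"] by simp
qed


lemma all3: "(\<forall>b<Suc (Suc (Suc 0)). P b) \<longleftrightarrow> P 0 \<and> P (Suc 0) \<and> P (Suc (Suc 0))"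
  by (auto simp: less_Suc_eq)
lemma all2: "(\<forall>b<Suc (Suc 0). P b) \<longleftrightarrow> P 0 \<and> P (Suc 0)"
  by (auto simp: less_Suc_eq)

lemma unsh3: "\<sigma> \<in> unshuffles [a,b,c] \<longleftrightarrow> \<sigma> permutes {..<a+b+c}
   \<and> (\<forall>i j. i < j \<and> j < a \<longrightarrow> \<sigma> i < \<sigma> j)
   \<and> (\<forall>i j. a \<le> i \<and> i < j \<and> j < a+b \<longrightarrow> \<sigma> i < \<sigma> j)
   \<and> (\<forall>i j. a+b \<le> i \<and> i < j \<and> j < a+b+c \<longrightarrow> \<sigma> i < \<sigma> j)"
  unfolding unshuffles_def by (simp add: all3 add.assoc)

lemma unsh2: "\<sigma> \<in> unshuffles [a,b] \<longleftrightarrow> \<sigma> permutes {..<a+b}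
   \<and> (\<forall>i j. i < j \<and> j < a \<longrightarrow> \<sigma> i < \<sigma> j)
   \<and> (\<forall>i j. a \<le> i \<and> i < j \<and> j < a+b \<longrightarrow> \<sigma> i < \<sigma> j)"
  unfolding unshuffles_def by (simp add: all2)

lemma block_unique:
  fixes \<sigma> \<tau> :: "nat \<Rightarrow> 'a::linorder"
  assumes "\<forall>i j. a \<le> i \<and> i < j \<and> j < b \<longrightarrow> \<sigma> i < \<sigma> j"
    and "\<forall>i j. a \<le> i \<and> i < j \<and> j < b \<longrightarrow> \<tau> i < \<tau> j"
    and "\<sigma> ` {a..<b} = \<tau> ` {a..<b}" and "a \<le> p" "p < b"
  shows "\<sigma> p = \<tau> p"
proof -
  have s1: "sorted_wrt (<) (map \<sigma> [a..<b])" using assms(1) by (auto simp: sorted_wrt_iff_nth_less)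
  have s2: "sorted_wrt (<) (map \<tau> [a..<b])" using assms(2) by (auto simp: sorted_wrt_iff_nth_less)
  have "map \<sigma> [a..<b] = map \<tau> [a..<b]"
    apply (rule sorted_distinct_set_unique)
    using s1 s2 assms(3) by (auto simp: strict_sorted_iff)
  then show ?thesis using assms(4,5) by simp
qed

lemma img_block: "\<sigma> permutes S \<Longrightarrow> B \<subseteq> S \<Longrightarrow> \<sigma> ` B = S - \<sigma> ` (S - B)"
  by (metis Diff_Diff_Int Diff_subset image_set_diff inf.absorb_iff2 permutes_image permutes_inj)

lemma del_nth: "i < length xs \<Longrightarrow> p < length xs - 1 \<Longrightarrow> del i xs ! p = xs ! (if p < i then p else Suc p)"
  by (auto simp: del_def nth_append min_def)
lemma del_len: "i < length xs \<Longrightarrow> length (del i xs) = length xs - 1"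
  by (auto simp: del_def)


lemma S_minus: "{..<Suc k} - {0..<k} = {k}" by auto

lemma fam1: "(\<Sum>\<sigma>\<in>unshuffles [k,1,0]. F \<sigma>) = (\<Sum>i<Suc k. F (Cp i (k-i)))"
proof -
  have Cval: "Cp i (k-i) p = (if i \<le> p \<and> p < k then p+1 else if p = k then i else p)" if "i \<le> k" for i p
    using that by (auto simp: Cp_def)
  have Cperm: "Cp i (k-i) permutes {..<Suc k}" if "i \<le> k" for i
    using Cp_perm[of i "k-i"] that by (auto intro: permutes_subset)
  have Cin: "Cp i (k-i) \<in> unshuffles [k,1,0]" if "i \<le> k" for i
    unfolding unsh3 using Cperm[OF that] by (simp add: Cval[OF that])
  have inj: "inj_on (\<lambda>i. Cp i (k-i)) {..<Suc k}"
  proof (rule inj_onI)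
    fix x y assume "x \<in> {..<Suc k}" "y \<in> {..<Suc k}" "Cp x (k-x) = Cp y (k-y)"
    then have "Cp x (k-x) k = Cp y (k-y) k" by simp
    then show "x = y" using \<open>x \<in> {..<Suc k}\<close> \<open>y \<in> {..<Suc k}\<close> by (simp add: Cval)
  qed
  have img: "unshuffles [k,1,0] = (\<lambda>i. Cp i (k-i)) ` {..<Suc k}"
  proof (rule set_eqI, rule iffI)
    fix \<sigma> assume s: "\<sigma> \<in> unshuffles [k,1,0]"
    then have sp: "\<sigma> permutes {..<Suc k}" and smono: "\<forall>i j. i < j \<and> j < k \<longrightarrow> \<sigma> i < \<sigma> j"
      unfolding unsh3 by auto
    define i where "i = \<sigma> k"
    have ik: "i \<le> k" unfolding i_def using permutes_in_image[OF sp, of k] by auto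
    have "\<sigma> = Cp i (k-i)"
    proof (rule ext)
      fix p
      consider "p < k" | "p = k" | "p > k" by arith
      then show "\<sigma> p = Cp i (k-i) p"
      proof cases
        case 1
        have i1: "\<sigma> ` {0..<k} = {..<Suc k} - {i}"
          using img_block[OF sp, of "{0..<k}"] by (simp add: S_minus i_def subset_eq)
        have i2: "Cp i (k-i) ` {0..<k} = {..<Suc k} - {i}"
          using img_block[OF Cperm[OF ik], of "{0..<k}"] Cval[OF ik, of k] by (simp add: S_minus subset_eq)
        have Cmono: "\<forall>a b. 0 \<le> a \<and> a < b \<and> b < k \<longrightarrow> Cp i (k-i) a < Cp i (k-i) b"
          by (simp add: Cval[OF ik])
        show ?thesis
          by (rule block_unique[OF _ Cmono]) (use smono i1 i2 1 in simp_all)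
      next
        case 2 then show ?thesis using Cval[OF ik] i_def by simp
      next
        case 3 then show ?thesis using Cval[OF ik] permutes_not_in[OF sp, of p] by simp
      qed
    qed
    then show "\<sigma> \<in> (\<lambda>i. Cp i (k-i)) ` {..<Suc k}" using ik by auto
  next
    fix \<sigma> assume "\<sigma> \<in> (\<lambda>i. Cp i (k-i)) ` {..<Suc k}"
    then show "\<sigma> \<in> unshuffles [k,1,0]" using Cin by auto
  qed
  show ?thesis unfolding img by (simp add: sum.reindex[OF inj])
qed


lemma S_minus1: "{..<Suc k} - {1..<Suc k} = {0}" "{..<Suc k} - {Suc 0..<Suc k} = {0}" by auto

lemma fam3: "(\<Sum>\<sigma>\<in>unshuffles [1,k]. F \<sigma>) = (\<Sum>i<Suc k. F (Dp 0 i))"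
proof -
  have Dval: "Dp 0 i p = (if p = 0 then i else if p \<le> i then p-1 else p)" for i p
    by (auto simp: Dp_def)
  have Dperm: "Dp 0 i permutes {..<Suc k}" if "i \<le> k" for i
    using Dp_perm[of 0 i] that by (auto intro: permutes_subset)
  have Din: "Dp 0 i \<in> unshuffles [1,k]" if "i \<le> k" for i
    unfolding unsh2 using Dperm[OF that] by (auto simp: Dval)
  have inj: "inj_on (\<lambda>i. Dp 0 i) {..<Suc k}"
  proof (rule inj_onI)
    fix x y assume "Dp 0 x = Dp 0 y"
    then have "Dp 0 x 0 = Dp 0 y 0" by simp
    then show "x = y" by (simp add: Dval)
  qed
  have img: "unshuffles [1,k] = (\<lambda>i. Dp 0 i) ` {..<Suc k}"
  proof (rule set_eqI, rule iffI)
    fix \<sigma> assume s: "\<sigma> \<in> unshuffles [1,k]"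
    then have sp: "\<sigma> permutes {..<Suc k}" and smono: "\<forall>i j. 1 \<le> i \<and> i < j \<and> j < Suc k \<longrightarrow> \<sigma> i < \<sigma> j"
      unfolding unsh2 by auto
    define i where "i = \<sigma> 0"
    have ik: "i \<le> k" unfolding i_def using permutes_in_image[OF sp, of 0] by auto
    have "\<sigma> = Dp 0 i"
    proof (rule ext)
      fix p
      consider "p = 0" | "1 \<le> p \<and> p < Suc k" | "p \<ge> Suc k" by arith
      then show "\<sigma> p = Dp 0 i p"
      proof cases
        case 2
        have i1: "\<sigma> ` {1..<Suc k} = {..<Suc k} - {i}"
          using img_block[OF sp, of "{1..<Suc k}"] by (simp add: S_minus1 i_def subset_eq)
        have i2: "Dp 0 i ` {1..<Suc k} = {..<Suc k} - {i}"
          using img_block[OF Dperm[OF ik], of "{1..<Suc k}"] Dval[of i 0] by (simp add: S_minus1 subset_eq)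
        have Dmono: "\<forall>a b. 1 \<le> a \<and> a < b \<and> b < Suc k \<longrightarrow> Dp 0 i a < Dp 0 i b"
          by (auto simp: Dval)
        show ?thesis
          by (rule block_unique[OF _ Dmono]) (use smono i1 i2 2 in simp_all)
      next
        case 1 then show ?thesis using Dval i_def by simp
      next
        case 3 then show ?thesis using Dval[of i p] ik permutes_not_in[OF sp, of p] by simp
      qed
    qed
    then show "\<sigma> \<in> (\<lambda>i. Dp 0 i) ` {..<Suc k}" using ik by auto
  next
    fix \<sigma> assume "\<sigma> \<in> (\<lambda>i. Dp 0 i) ` {..<Suc k}"
    then show "\<sigma> \<in> unshuffles [1,k]" using Din by auto
  qed
  show ?thesis unfolding img by (simp add: sum.reindex[OF inj])
qed


lemma S_minus2: "1 \<le> k \<Longrightarrow> {..<Suc k} - {2..<Suc k} = {0,1}" by auto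

lemma fam2:
  assumes k1: "1 \<le> k"
  shows "(\<Sum>\<sigma>\<in>unshuffles [1,1,k-1]. F \<sigma>) =
    (\<Sum>j<Suc k. \<Sum>i<j. F (Dp 0 i \<circ> Dp 1 (j-1)) + F (Dp 0 i \<circ> Dp 1 (j-1) \<circ> transpose 0 1))"
proof -
  define U where "U = unshuffles [1,1,k-1]"
  define E where "E i j = Dp 0 i \<circ> Dp 1 (j-1)" for i j :: nat
  define E' where "E' i j = Dp 0 i \<circ> Dp 1 (j-1) \<circ> transpose 0 1" for i j :: nat
  have Eval: "E i j p = (if p=0 then i else if p=1 then j else if p \<le> i+1 then p-2 else if p \<le> j then p-1 else p)"
    if "i < j" for i j p using that by (auto simp: E_def Dp_def)
  have E'val: "E' i j p = (if p=0 then j else if p=1 then i else E i j p)" if "i < j" for i j p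
  proof -
    have "E' i j p = E i j (transpose 0 1 p)" by (simp add: E'_def E_def)
    then show ?thesis using Eval[OF that] by (simp add: transpose_def)
  qed
  have kk: "1+1+(k-1) = Suc k" using k1 by linarith
  have Uchar: "\<sigma> \<in> U \<longleftrightarrow> \<sigma> permutes {..<Suc k} \<and>
     (\<forall>i j. 2 \<le> i \<and> i < j \<and> j < Suc k \<longrightarrow> \<sigma> i < \<sigma> j)" for \<sigma>
    unfolding U_def unsh3 kk using k1 by auto
  have Eperm: "E i j permutes {..<Suc k}" if "i < j" "j \<le> k" for i j
  proof -
    have a: "Dp 0 i permutes {..<Suc k}" using Dp_perm[of 0 i] that by (auto intro: permutes_subset)
    have b: "Dp 1 (j-1) permutes {..<Suc k}" using Dp_perm[of 1 "j-1"] that by (auto intro: permutes_subset)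
    show ?thesis unfolding E_def by (rule permutes_compose[OF b a])
  qed
  have Tperm: "transpose 0 1 permutes {..<Suc k}" using k1 by (intro permutes_swap_id) auto
  have E'perm: "E' i j permutes {..<Suc k}" if "i < j" "j \<le> k" for i j
    using permutes_compose[OF Tperm Eperm[OF that]] by (simp add: E'_def E_def)
  have Ein: "E i j \<in> U" if "i < j" "j \<le> k" for i j
    unfolding Uchar using Eperm[OF that] Eval[OF that(1)] by auto
  have E'in: "E' i j \<in> U" if "i < j" "j \<le> k" for i j
    unfolding Uchar using E'perm[OF that] Eval[OF that(1)] E'val[OF that(1)] by auto
  have uniq: "\<sigma> = \<tau>" if "\<sigma> \<in> U" "\<tau> \<in> U" "\<sigma> 0 = \<tau> 0" "\<sigma> 1 = \<tau> 1" for \<sigma> \<tau>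
  proof (rule ext)
    fix p
    have sp: "\<sigma> permutes {..<Suc k}" and smono: "\<forall>i j. 2 \<le> i \<and> i < j \<and> j < Suc k \<longrightarrow> \<sigma> i < \<sigma> j"
      using that(1) Uchar by auto
    have tp: "\<tau> permutes {..<Suc k}" and tmono: "\<forall>i j. 2 \<le> i \<and> i < j \<and> j < Suc k \<longrightarrow> \<tau> i < \<tau> j"
      using that(2) Uchar by auto
    consider "p = 0" | "p = 1" | "2 \<le> p \<and> p < Suc k" | "p \<ge> Suc k" by arith
    then show "\<sigma> p = \<tau> p"
    proof cases
      case 3
      have i1: "\<sigma> ` {2..<Suc k} = {..<Suc k} - {\<sigma> 0, \<sigma> 1}"
        using img_block[OF sp, of "{2..<Suc k}"] by (simp add: S_minus2[OF k1] subset_eq)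
      have i2: "\<tau> ` {2..<Suc k} = {..<Suc k} - {\<tau> 0, \<tau> 1}"
        using img_block[OF tp, of "{2..<Suc k}"] by (simp add: S_minus2[OF k1] subset_eq)
      show ?thesis
        by (rule block_unique[OF smono tmono]) (use i1 i2 3 that in simp_all)
    next
      case 4 then show ?thesis using permutes_not_in[OF sp, of p] permutes_not_in[OF tp, of p] by simp
    qed (use that in simp_all)
  qed
  define S where "S = (SIGMA j:{..<Suc k}. {..<j})"
  define g1 where "g1 = (\<lambda>(j,i). E i j)"
  define g2 where "g2 = (\<lambda>(j,i). E' i j)"
  have inj1: "inj_on g1 S"
  proof (rule inj_onI)
    fix x y assume "x \<in> S" "y \<in> S" "g1 x = g1 y"
    then obtain j i j' i' where x: "x = (j,i)" "i < j" and y: "y = (j',i')" "i' < j'" and e: "E i j = E i' j'"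
      unfolding S_def g1_def by auto
    have "E i j 0 = E i' j' 0" "E i j 1 = E i' j' 1" using e by simp_all
    then show "x = y" using x y Eval[OF x(2)] Eval[OF y(2)] by simp
  qed
  have inj2: "inj_on g2 S"
  proof (rule inj_onI)
    fix x y assume "x \<in> S" "y \<in> S" "g2 x = g2 y"
    then obtain j i j' i' where x: "x = (j,i)" "i < j" and y: "y = (j',i')" "i' < j'" and e: "E' i j = E' i' j'"
      unfolding S_def g2_def by auto
    have "E' i j 0 = E' i' j' 0" "E' i j 1 = E' i' j' 1" using e by simp_all
    moreover have "E' i j 0 = j" "E' i j 1 = i" "E' i' j' 0 = j'" "E' i' j' 1 = i'"
      using E'val[OF x(2)] E'val[OF y(2)] by simp_all
    ultimately show "x = y" using x y by simp
  qed
  have disj: "g1 ` S \<inter> g2 ` S = {}"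
  proof (rule ccontr)
    assume "g1 ` S \<inter> g2 ` S \<noteq> {}"
    then obtain j i j' i' where x: "i < j" and y: "i' < j'" and e: "E i j = E' i' j'"
      unfolding S_def g1_def g2_def by auto
    have "E i j 0 = E' i' j' 0" "E i j 1 = E' i' j' 1" using e by simp_all
    then show False using x y Eval[OF x] by (simp add: E'val[OF y])
  qed
  have img: "U = g1 ` S \<union> g2 ` S"
  proof (rule set_eqI, rule iffI)
    fix \<sigma> assume s: "\<sigma> \<in> U"
    then have sp: "\<sigma> permutes {..<Suc k}" using Uchar by auto
    have ne: "\<sigma> 0 \<noteq> \<sigma> 1" using permutes_inj[OF sp] by (metis inj_eq zero_neq_one)
    have a: "\<sigma> 0 < Suc k" "\<sigma> 1 < Suc k" using permutes_in_image[OF sp] using k1 by auto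
    show "\<sigma> \<in> g1 ` S \<union> g2 ` S"
    proof (cases "\<sigma> 0 < \<sigma> 1")
      case True
      have "\<sigma> = E (\<sigma> 0) (\<sigma> 1)"
        by (rule uniq[OF s Ein]) (use True a Eval[OF True] in auto)
      moreover have "(\<sigma> 1, \<sigma> 0) \<in> S" using True a unfolding S_def by auto
      ultimately show ?thesis unfolding g1_def by force
    next
      case False
      then have lt: "\<sigma> 1 < \<sigma> 0" using ne by simp
      have "\<sigma> = E' (\<sigma> 1) (\<sigma> 0)"
        by (rule uniq[OF s E'in]) (use lt a E'val[OF lt, of 0] E'val[OF lt, of 1] in auto)
      moreover have "(\<sigma> 0, \<sigma> 1) \<in> S" using lt a unfolding S_def by auto
      ultimately show ?thesis unfolding g2_def by force
    qed
  next
    fix \<sigma> assume "\<sigma> \<in> g1 ` S \<union> g2 ` S"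
    then show "\<sigma> \<in> U" unfolding g1_def g2_def S_def using Ein E'in by auto
  qed
  have fS: "finite S" unfolding S_def by auto
  have "(\<Sum>\<sigma>\<in>U. F \<sigma>) = (\<Sum>\<sigma>\<in>g1 ` S. F \<sigma>) + (\<Sum>\<sigma>\<in>g2 ` S. F \<sigma>)"
    unfolding img by (rule sum.union_disjoint) (use fS disj in auto)
  also have "\<dots> = (\<Sum>x\<in>S. F (g1 x)) + (\<Sum>x\<in>S. F (g2 x))"
    by (simp add: sum.reindex[OF inj1] sum.reindex[OF inj2])
  also have "\<dots> = (\<Sum>x\<in>S. F (g1 x) + F (g2 x))" by (simp add: sum.distrib)
  also have "\<dots> = (\<Sum>j<Suc k. \<Sum>i<j. F (E i j) + F (E' i j))"
    unfolding S_def g1_def g2_def by (subst sum.Sigma) (auto intro!: sum.cong split: prod.splits)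
  finally show ?thesis unfolding U_def E_def E'_def .
qed


lemma seg_len: "length (seg us \<sigma> a b) = b - a" by (simp add: seg_def)
lemma seg_nth: "p < b - a \<Longrightarrow> seg us \<sigma> a b ! p = us ! \<sigma> (a + p)" by (simp add: seg_def)

lemma Cval: "i \<le> k \<Longrightarrow> Cp i (k-i) p = (if i \<le> p \<and> p < k then p+1 else if p = k then i else p)"
  by (auto simp: Cp_def)

lemma seg_C: "length us = Suc k \<Longrightarrow> i \<le> k \<Longrightarrow> seg us (Cp i (k-i)) 0 k = del i us"
  by (rule nth_equalityI) (auto simp: seg_len seg_nth del_len del_nth Cval)

lemma Dval: "Dp 0 i p = (if p = 0 then i else if p \<le> i then p-1 else p)"
  by (auto simp: Dp_def)

lemma seg_D: "length us = Suc k \<Longrightarrow> i \<le> k \<Longrightarrow> seg us (Dp 0 i) 1 (k+1) = del i us"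
  by (rule nth_equalityI) (auto simp: seg_len seg_nth del_len del_nth Dval)

lemma Eval: "i < j \<Longrightarrow> (Dp 0 i \<circ> Dp 1 (j-1)) p = (if p=0 then i else if p=1 then j else if p \<le> i+1 then p-2 else if p \<le> j then p-1 else p)"
  by (auto simp: Dp_def)

lemma seg_E: "length us = Suc k \<Longrightarrow> i < j \<Longrightarrow> j \<le> k \<Longrightarrow> seg us (Dp 0 i \<circ> Dp 1 (j-1)) 2 (k+1) = del i (del j us)"
proof (rule nth_equalityI)
  assume a: "length us = Suc k" "i < j" "j \<le> k"
  show "length (seg us (Dp 0 i \<circ> Dp 1 (j-1)) 2 (k+1)) = length (del i (del j us))"
    using a by (simp add: seg_len del_len)
  fix p assume "p < length (seg us (Dp 0 i \<circ> Dp 1 (j-1)) 2 (k+1))"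
  then have p: "p < k - 1" by (simp add: seg_len)
  have lj: "length (del j us) = k" using a by (simp add: del_len)
  have d1: "del i (del j us) ! p = del j us ! (if p < i then p else Suc p)"
    using a p lj by (subst del_nth) auto
  also have "\<dots> = us ! (if (if p < i then p else Suc p) < j then (if p < i then p else Suc p) else Suc (if p < i then p else Suc p))"
    using a p by (subst del_nth) auto
  finally have d: "del i (del j us) ! p = us ! (if p < i then p else if Suc p < j then Suc p else Suc (Suc p))"
    using a(2) by (auto split: if_splits)
  have e: "(Dp 0 i \<circ> Dp 1 (j-1)) (2+p) = (if p < i then p else if Suc p < j then Suc p else Suc (Suc p))"
    using Eval[OF a(2), of "2+p"] by auto
  have "seg us (Dp 0 i \<circ> Dp 1 (j-1)) 2 (k+1) ! p = us ! ((Dp 0 i \<circ> Dp 1 (j-1)) (2+p))"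
    by (rule seg_nth) (use p in simp)
  also have "\<dots> = del i (del j us) ! p" unfolding e d ..
  finally show "seg us (Dp 0 i \<circ> Dp 1 (j-1)) 2 (k+1) ! p = del i (del j us) ! p" .
qed

lemma seg_E': "length us = Suc k \<Longrightarrow> i < j \<Longrightarrow> j \<le> k \<Longrightarrow> seg us (Dp 0 i \<circ> Dp 1 (j-1) \<circ> transpose 0 1) 2 (k+1) = del i (del j us)"
proof -
  assume a: "length us = Suc k" "i < j" "j \<le> k"
  have "seg us (Dp 0 i \<circ> Dp 1 (j-1) \<circ> transpose 0 1) 2 (k+1) = seg us (Dp 0 i \<circ> Dp 1 (j-1)) 2 (k+1)"
    unfolding seg_def by (rule map_cong) (auto simp: transpose_def)
  then show ?thesis using seg_E[OF a] by simp
qed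

lemma sign_E: "i < j \<Longrightarrow> sign (Dp 0 i \<circ> Dp 1 (j-1)) = (-1)^i * (-1)^(j-1)"
  and sign_E': "i < j \<Longrightarrow> sign (Dp 0 i \<circ> Dp 1 (j-1) \<circ> transpose 0 1) = - ((-1)^i * (-1)^(j-1))"
proof -
  have p1: "permutation (Dp 0 i)" using Dp_perm[of 0 i] permutes_imp_permutation by blast
  have p2: "permutation (Dp 1 (j-1))" using Dp_perm[of 1 "j-1"] permutes_imp_permutation by blast
  have e: "sign (Dp 0 i \<circ> Dp 1 (j-1)) = (-1)^i * (-1)^(j-1)"
    using sign_compose[OF p1 p2] Dp_perm[of 0 i] Dp_perm[of 1 "j-1"] by simp
  then show "i < j \<Longrightarrow> sign (Dp 0 i \<circ> Dp 1 (j-1)) = (-1)^i * (-1)^(j-1)" by simp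
  have "sign (Dp 0 i \<circ> Dp 1 (j-1) \<circ> transpose 0 1) = sign (Dp 0 i \<circ> Dp 1 (j-1)) * sign (transpose 0 (1::nat))"
    by (rule sign_compose[OF permutation_compose[OF p1 p2] permutation_swap_id])
  then show "i < j \<Longrightarrow> sign (Dp 0 i \<circ> Dp 1 (j-1) \<circ> transpose 0 1) = - ((-1)^i * (-1)^(j-1))"
    using e by (simp add: sign_swap_id)
qed

lemma lin_diff: "Vector_Spaces.linear s1 s2 h \<Longrightarrow> h (x - y) = h x - h y"
proof -
  assume "Vector_Spaces.linear s1 s2 h"
  then interpret linear s1 s2 h .
  show ?thesis by (rule diff)
qed


lemma sgn_aux1: "i \<le> k \<Longrightarrow> (-1::'a::ring_1)^k * (-1)^(k-i) = (-1)^i"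
proof -
  assume "i \<le> k"
  then obtain d where k: "k = i + d" by (metis le_add_diff_inverse)
  have "(-1::'a)^d * (-1)^d = (-1)^(d+d)" by (simp add: power_add)
  also have "\<dots> = 1" using neg_one_even_power[of "d+d"] by simp
  finally have "(-1::'a)^d * (-1)^d = 1" .
  then show ?thesis unfolding k by (simp add: power_add mult.assoc)
qed

lemma sgn_aux2: "0 < j \<Longrightarrow> -((-1::'a::ring_1)^i * (-1)^(j-1)) = (-1)^(i+j)"
  by (cases j) (auto simp: power_add)

theorem proposition3p3:
  fixes scg :: "'k::field \<Rightarrow> 'g::ab_group_add \<Rightarrow> 'g"
    and br :: "'g \<Rightarrow> 'g \<Rightarrow> 'g"
    and scv :: "'k \<Rightarrow> 'v::ab_group_add \<Rightarrow> 'v"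
    and rho :: "'g \<Rightarrow> 'v \<Rightarrow> 'v"
    and T :: "'v \<Rightarrow> 'g"
    and k :: nat
    and f :: "'v list \<Rightarrow> 'g"
    and us :: "'v list"
  assumes "lie_algebra scg br"
    and "lie_representation scg br scv rho"
    and "O_operator scg br scv rho T"
    and "alt_cochain scv scg k f"
    and "length us = Suc k"
  shows "d_bar scg br rho T k f us
         = scg ((-1) ^ k) (bbracket scg br rho 1 (\<lambda>vs. T (vs ! 0)) k f us)"
proof -
  have vs: "vector_space scg" using assms(1) unfolding lie_algebra_def by blast
  interpret V: vector_space scg by (rule vs)
  have flin: "Vector_Spaces.linear scv scg (\<lambda>x. f (vs[0 := x]))" if "length vs = k" "0 < k" for vs
    using assms(4) that unfolding alt_cochain_def by blast
  define A1 where "A1 i = T (rho (f (del i us)) (us ! i))" for i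
  define A2 where "A2 j i = f (T_bracket rho T (us ! i) (us ! j) # del i (del j us))" for j i
  define A3 where "A3 i = br (T (us ! i)) (f (del i us))" for i
  have X1: "(\<Sum>\<sigma>\<in>unshuffles [k, 1, 1 - 1]. scg (of_int (sign \<sigma>))
       (T ((rho (f (seg us \<sigma> 0 k)) (us ! \<sigma> k) # seg us \<sigma> (k + 1) (k + 1)) ! 0)))
     = (\<Sum>i<Suc k. scg ((-1)^(k-i)) (A1 i))" (is "?L = ?R")
  proof -
    have "?L = (\<Sum>\<sigma>\<in>unshuffles [k,1,0]. scg (of_int (sign \<sigma>)) (T (rho (f (seg us \<sigma> 0 k)) (us ! \<sigma> k))))"
      by simp
    also have "\<dots> = (\<Sum>i<Suc k. scg (of_int (sign (Cp i (k-i)))) (T (rho (f (seg us (Cp i (k-i)) 0 k)) (us ! Cp i (k-i) k))))"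
      by (rule fam1)
    also have "\<dots> = ?R" using assms(5) by (intro sum.cong) (auto simp: A1_def seg_C Cval Cp_perm)
    finally show ?thesis .
  qed
  have X3: "(\<Sum>\<sigma>\<in>unshuffles [1, k]. scg (of_int (sign \<sigma>)) (br (T (seg us \<sigma> 0 1 ! 0)) (f (seg us \<sigma> 1 (k + 1)))))
     = (\<Sum>i<Suc k. scg ((-1)^i) (A3 i))" (is "?L = ?R")
  proof -
    have "?L = (\<Sum>i<Suc k. scg (of_int (sign (Dp 0 i))) (br (T (seg us (Dp 0 i) 0 1 ! 0)) (f (seg us (Dp 0 i) 1 (k + 1)))))"
      by (rule fam3)
    also have "\<dots> = ?R" using assms(5) by (intro sum.cong) (auto simp: A3_def seg_D[simplified] seg_nth Dp_perm Dval)
    finally show ?thesis .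
  qed
  have X2: "(\<Sum>\<sigma>\<in>unshuffles [1, 1, k - 1]. scg (of_int (sign \<sigma>))
        (f (rho (T (seg us \<sigma> 0 1 ! 0)) (us ! \<sigma> 1) # seg us \<sigma> (1 + 1) (k + 1))))
     = (\<Sum>j<Suc k. \<Sum>i<j. scg ((-1)^i * (-1)^(j-1)) (A2 j i))" (is "?L = ?R") if k0: "0 < k"
  proof -
    have "?L = (\<Sum>j<Suc k. \<Sum>i<j.
        scg (of_int (sign (Dp 0 i \<circ> Dp 1 (j-1))))
          (f (rho (T (seg us (Dp 0 i \<circ> Dp 1 (j-1)) 0 1 ! 0)) (us ! (Dp 0 i \<circ> Dp 1 (j-1)) 1) # seg us (Dp 0 i \<circ> Dp 1 (j-1)) (1 + 1) (k + 1)))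
      + scg (of_int (sign (Dp 0 i \<circ> Dp 1 (j-1) \<circ> transpose 0 1)))
          (f (rho (T (seg us (Dp 0 i \<circ> Dp 1 (j-1) \<circ> transpose 0 1) 0 1 ! 0)) (us ! (Dp 0 i \<circ> Dp 1 (j-1) \<circ> transpose 0 1) 1) # seg us (Dp 0 i \<circ> Dp 1 (j-1) \<circ> transpose 0 1) (1 + 1) (k + 1))))"
      using k0 by (intro fam2) simp
    also have "\<dots> = ?R"
    proof (intro sum.cong refl)
      fix j i assume j: "j \<in> {..<Suc k}" and i: "i \<in> {..<j}"
      then have ij: "i < j" "j \<le> k" by auto
      define R where "R = del i (del j us)"
      define c :: 'k where "c = (-1)^i * (-1)^(j-1)"
      have lR: "length (R) = k - 1" unfolding R_def using ij assms(5) by (simp add: del_len)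
      have e1: "seg us (Dp 0 i \<circ> Dp 1 (j-1)) 0 1 ! 0 = us ! i"
        using Eval[OF ij(1), of 0] by (simp add: seg_nth)
      have e2: "us ! (Dp 0 i \<circ> Dp 1 (j-1)) 1 = us ! j" using Eval[OF ij(1), of 1] by simp
      have e3: "seg us (Dp 0 i \<circ> Dp 1 (j-1)) (1+1) (k+1) = R"
        using seg_E[OF assms(5) ij] by (simp add: R_def numeral_2_eq_2)
      have e1': "seg us (Dp 0 i \<circ> Dp 1 (j-1) \<circ> transpose 0 1) 0 1 ! 0 = us ! j"
        using Eval[OF ij(1), of 1] by (simp add: seg_nth)
      have e2': "us ! (Dp 0 i \<circ> Dp 1 (j-1) \<circ> transpose 0 1) 1 = us ! i" using Eval[OF ij(1), of 0] by simp
      have e3': "seg us (Dp 0 i \<circ> Dp 1 (j-1) \<circ> transpose 0 1) (1+1) (k+1) = R"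
        using seg_E'[OF assms(5) ij] by (simp add: R_def numeral_2_eq_2)
      have s1: "of_int (sign (Dp 0 i \<circ> Dp 1 (j-1))) = c" unfolding c_def sign_E[OF ij(1)] by simp
      have s2: "of_int (sign (Dp 0 i \<circ> Dp 1 (j-1) \<circ> transpose 0 1)) = - c" unfolding c_def sign_E'[OF ij(1)] by simp
      have lin: "f ((rho (T (us ! i)) (us ! j) - rho (T (us ! j)) (us ! i)) # R)
          = f (rho (T (us ! i)) (us ! j) # R) - f (rho (T (us ! j)) (us ! i) # R)"
        using lin_diff[OF flin[of "0 # R"], of "rho (T (us ! i)) (us ! j)" "rho (T (us ! j)) (us ! i)"] lR k0 by simp
      show "scg (of_int (sign (Dp 0 i \<circ> Dp 1 (j-1))))
          (f (rho (T (seg us (Dp 0 i \<circ> Dp 1 (j-1)) 0 1 ! 0)) (us ! (Dp 0 i \<circ> Dp 1 (j-1)) 1) # seg us (Dp 0 i \<circ> Dp 1 (j-1)) (1 + 1) (k + 1)))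
      + scg (of_int (sign (Dp 0 i \<circ> Dp 1 (j-1) \<circ> transpose 0 1)))
          (f (rho (T (seg us (Dp 0 i \<circ> Dp 1 (j-1) \<circ> transpose 0 1) 0 1 ! 0)) (us ! (Dp 0 i \<circ> Dp 1 (j-1) \<circ> transpose 0 1) 1) # seg us (Dp 0 i \<circ> Dp 1 (j-1) \<circ> transpose 0 1) (1 + 1) (k + 1)))
        = scg ((-1)^i * (-1)^(j-1)) (A2 j i)"
        unfolding e1 e2 e3 e1' e2' e3' s1 s2 A2_def T_bracket_def R_def[symmetric] c_def[symmetric] lin
        by (simp add: V.scale_right_diff_distrib)
    qed
    finally show ?thesis .
  qed
  have D: "d_bar scg br rho T k f us = (\<Sum>i<Suc k. scg ((-1)^i) (A3 i)) + (\<Sum>i<Suc k. scg ((-1)^i) (A1 i))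
      + (\<Sum>j<Suc k. \<Sum>i<j. scg ((-1)^(i+j)) (A2 j i))"
    unfolding d_bar_def A1_def A2_def A3_def ..
  have P1: "scg ((-1)^k) (\<Sum>i<Suc k. scg ((-1)^(k-i)) (A1 i)) = (\<Sum>i<Suc k. scg ((-1)^i) (A1 i))"
    unfolding V.scale_sum_right by (rule sum.cong) (auto simp: sgn_aux1)
  have P3: "scg ((-1)^k) (scg ((-1)^k) x) = x" for x
    by (simp flip: power_mult_distrib)
  show ?thesis
  proof (cases "k = 0")
    case True
    show ?thesis unfolding bbracket_def X1 X3 D P1
      using True by (simp add: V.scale_right_distrib V.scale_right_diff_distrib P3)
  next
    case False
    have k0': "0 < k" using False by simp
    have P2: "- (\<Sum>j<Suc k. \<Sum>i<j. scg ((-1)^i * (-1)^(j-1)) (A2 j i)) = (\<Sum>j<Suc k. \<Sum>i<j. scg ((-1)^(i+j)) (A2 j i))"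
      unfolding sum_negf[symmetric]
    proof (intro sum.cong refl)
      fix j i assume "j \<in> {..<Suc k}" "i \<in> {..<j}"
      then have "0 < j" by auto
      then show "- scg ((-1)^i * (-1)^(j-1)) (A2 j i) = scg ((-1)^(i+j)) (A2 j i)"
        unfolding V.scale_minus_left[symmetric] sgn_aux2[OF \<open>0 < j\<close>] by simp
    qed
    have i1: "(if (1::nat) = 0 then 0 else x) = x" for x :: 'g by simp
    have i2: "(if k = 0 then 0 else x) = x" for x :: 'g using False by simp
    have alg: "scg ((-1)^k) (a - scg ((-1)^k) m + scg ((-1)^k) b) = scg ((-1)^k) a - m + b" for a m b
      by (simp add: V.scale_right_distrib V.scale_right_diff_distrib P3)
    show ?thesis unfolding bbracket_def X1 X3 D X2[OF k0'] mult_1_right i1 i2 alg P1 P2[symmetric]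
      by (simp add: algebra_simps)
  qed
qed

end
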